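(* Let $K$ be a perfect field, $k\subset K$ a subfield, $\lambda\in\operatorname{Emb}(K)$ with $|\lambda^G|=n<\infty$, and let $K^n_\phi$ be the simple two-sided vector space corresponding to $\lambda$. Let $\phi^T:K\to M_n(K)$ be $x\mapsto\phi(x)^T$. Then $K^n_{\phi^T}\cong K^n_\phi$ as two-sided vector spaces.
   Context: Let $\overline{K}$ be a fixed algebraic closure of $K$. A two-sided vector space is a $K\otimes_k K$-module. $\operatorname{Emb}(K)$ is the set of $k$-linear field embeddings $K\to\overline{K}$; $G=\operatorname{Aut}(\overline{K}/K)$ acts by left composition, with orbits $\lambda^G$. $K(\lambda)$ is the composite of $K$ and $\lambda(K)$ in $\overline{K}$. For a homomorphism $\phi:K\to M_n(K)$, $K^n_\phi$ denotes the row vectors $K^n$ with left action by scalar multiplication and right action $v\cdot x=v\phi(x)$. The simple two-sided vector space corresponding to $\lambda$ is $K^n_\phi$ with $\phi$ defined as follows: $\alpha_1,\dots,\alpha_n$ is a basis of $K(\lambda)$ over $K$, $\lambda_i:K\to K$ are defined by $\lambda(x)=\sum_i\lambda_i(x)\alpha_i$, $\beta_{ijk}\in K$ by $\alpha_i\alpha_j=\sum_k\beta_{ijk}\alpha_k$, and $\phi_{ij}(x)=\sum_k\beta_{jki}\lambda_k(x)$. *)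

theory Defs
  imports "Jordan_Normal_Form.Matrix" "HOL-Computational_Algebra.Polynomial"
begin

definition field_hom :: "('a::field \<Rightarrow> 'b::field) \<Rightarrow> bool" where
  "field_hom f \<longleftrightarrow> f 0 = 0 \<and> f 1 = 1 \<and> (\<forall>x y. f (x + y) = f x + f y) \<and> (\<forall>x y. f (x * y) = f x * f y)"

definition is_subfield :: "'a::field set \<Rightarrow> bool" where
  "is_subfield F \<longleftrightarrow> 0 \<in> F \<and> 1 \<in> F \<and> (\<forall>x\<in>F. \<forall>y\<in>F. x + y \<in> F \<and> x * y \<in> F)
     \<and> (\<forall>x\<in>F. - x \<in> F \<and> inverse x \<in> F)"

definition perfect_field :: "'a::field itself \<Rightarrow> bool" where
  "perfect_field T \<longleftrightarrow> CHAR('a) = 0 \<or> (\<forall>x::'a. \<exists>y. y ^ CHAR('a) = x)"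

definition alg_closure :: "('a::field \<Rightarrow> 'b::field) \<Rightarrow> bool" where
  "alg_closure \<iota> \<longleftrightarrow> field_hom \<iota>
     \<and> (\<forall>p::'b poly. degree p > 0 \<longrightarrow> (\<exists>z. poly p z = 0))
     \<and> (\<forall>b. \<exists>p::'a poly. p \<noteq> 0 \<and> poly (map_poly \<iota> p) b = 0)"

definition Emb :: "'a::field set \<Rightarrow> ('a \<Rightarrow> 'b::field) \<Rightarrow> ('a \<Rightarrow> 'b) set" where
  "Emb k \<iota> = {l. field_hom l \<and> (\<forall>c\<in>k. \<forall>x. l (c * x) = \<iota> c * l x)}"

definition Gal :: "('a::field \<Rightarrow> 'b::field) \<Rightarrow> ('b \<Rightarrow> 'b) set" where
  "Gal \<iota> = {\<sigma>. field_hom \<sigma> \<and> bij \<sigma> \<and> (\<forall>a. \<sigma> (\<iota> a) = \<iota> a)}"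

definition orbit :: "('a::field \<Rightarrow> 'b::field) \<Rightarrow> ('a \<Rightarrow> 'b) \<Rightarrow> ('a \<Rightarrow> 'b) set" where
  "orbit \<iota> l = (\<lambda>\<sigma>. \<sigma> \<circ> l) ` Gal \<iota>"

definition composite :: "('a::field \<Rightarrow> 'b::field) \<Rightarrow> ('a \<Rightarrow> 'b) \<Rightarrow> 'b set" where
  "composite \<iota> l = \<Inter>{F. is_subfield F \<and> range \<iota> \<subseteq> F \<and> range l \<subseteq> F}"

definition is_basis :: "('a::field \<Rightarrow> 'b::field) \<Rightarrow> 'b set \<Rightarrow> nat \<Rightarrow> (nat \<Rightarrow> 'b) \<Rightarrow> bool" where
  "is_basis \<iota> F n \<alpha> \<longleftrightarrow>
     (\<forall>c. (\<Sum>i<n. \<iota> (c i) * \<alpha> i) = 0 \<longrightarrow> (\<forall>i<n. c i = 0))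
     \<and> F = {\<Sum>i<n. \<iota> (c i) * \<alpha> i | c. True}"

definition phi_mat :: "nat \<Rightarrow> (nat \<Rightarrow> nat \<Rightarrow> nat \<Rightarrow> 'a::field) \<Rightarrow> (nat \<Rightarrow> 'a \<Rightarrow> 'a) \<Rightarrow> 'a \<Rightarrow> 'a mat" where
  "phi_mat n \<beta> lc x = mat n n (\<lambda>(i, j). \<Sum>k<n. \<beta> j k i * lc k x)"

definition ract :: "'a::comm_ring_1 vec \<Rightarrow> 'a mat \<Rightarrow> 'a vec" where
  "ract v A = vec (dim_col A) (\<lambda>j. \<Sum>i<dim_vec v. v $ i * A $$ (i, j))"

text \<open>Isomorphism of two-sided vector spaces K^n_phi -> K^n_psi (left: scalars, right: v.x = v phi(x)).\<close>
definition tsv_iso :: "nat \<Rightarrow> ('a::field \<Rightarrow> 'a mat) \<Rightarrow> ('a \<Rightarrow> 'a mat) \<Rightarrow> ('a vec \<Rightarrow> 'a vec) \<Rightarrow> bool" where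
  "tsv_iso n \<phi> \<psi> f \<longleftrightarrow> bij_betw f (carrier_vec n) (carrier_vec n)
     \<and> (\<forall>v\<in>carrier_vec n. \<forall>w\<in>carrier_vec n. f (v + w) = f v + f w)
     \<and> (\<forall>c. \<forall>v\<in>carrier_vec n. f (c \<cdot>\<^sub>v v) = c \<cdot>\<^sub>v f v)
     \<and> (\<forall>x. \<forall>v\<in>carrier_vec n. f (ract v (\<phi> x)) = ract (f v) (\<psi> x))"

definition tsv_isomorphic :: "nat \<Rightarrow> ('a::field \<Rightarrow> 'a mat) \<Rightarrow> ('a \<Rightarrow> 'a mat) \<Rightarrow> bool" where
  "tsv_isomorphic n \<phi> \<psi> \<longleftrightarrow> (\<exists>f. tsv_iso n \<phi> \<psi> f)"

end

theory Submission imports Defs "Jordan_Normal_Form.Determinant" begin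

definition Ev :: "('K::field \<Rightarrow> 'L::field) \<Rightarrow> (nat \<Rightarrow> 'L) \<Rightarrow> nat \<Rightarrow> (nat \<Rightarrow> 'K) \<Rightarrow> 'L" where
  "Ev \<iota> \<alpha> n c = (\<Sum>i<n. \<iota> (c i) * \<alpha> i)"

lemma hom_sum: assumes "field_hom \<iota>" shows "\<iota> (sum g A) = (\<Sum>a\<in>A. \<iota> (g a))"
proof (cases "finite A")
  case True then show ?thesis
    by (induction A rule: finite_induct) (use assms in \<open>auto simp: field_hom_def\<close>)
next
  case False then show ?thesis using assms by (simp add: field_hom_def)
qed

lemma hom_minus: assumes "field_hom \<iota>" shows "\<iota> (a - b) = \<iota> a - \<iota> b"
proof -
  have "\<iota> (a - b) + \<iota> b = \<iota> a" using assms unfolding field_hom_def by (metis diff_add_cancel)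
  then show ?thesis by (simp add: eq_diff_eq)
qed

lemma Ev_unique:
  assumes hom: "field_hom \<iota>"
    and indep: "\<forall>c. (\<Sum>i<n. \<iota> (c i) * \<alpha> i) = 0 \<longrightarrow> (\<forall>i<n. c i = 0)"
    and eq: "Ev \<iota> \<alpha> n c = Ev \<iota> \<alpha> n d" and i: "i < n"
  shows "c i = d i"
proof -
  have "(\<Sum>i<n. \<iota> (c i - d i) * \<alpha> i) = 0"
    using eq by (simp add: Ev_def hom_minus[OF hom] left_diff_distrib sum_subtractf)
  then have "c i - d i = 0" using indep[rule_format, of "\<lambda>i. c i - d i"] i by blast
  then show ?thesis by simp
qed

lemma Ev_prod:
  assumes hom: "field_hom \<iota>"
    and mt: "\<forall>i<n. \<forall>j<n. \<alpha> i * \<alpha> j = (\<Sum>m<n. \<iota> (\<beta> i j m) * \<alpha> m)"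
  shows "Ev \<iota> \<alpha> n c * Ev \<iota> \<alpha> n d = Ev \<iota> \<alpha> n (\<lambda>m. \<Sum>i<n. \<Sum>j<n. c i * d j * \<beta> i j m)"
proof -
  have hm: "\<And>a b. \<iota> (a * b) = \<iota> a * \<iota> b" using hom by (simp add: field_hom_def)
  have "Ev \<iota> \<alpha> n c * Ev \<iota> \<alpha> n d = (\<Sum>i<n. \<Sum>j<n. \<iota> (c i) * \<iota> (d j) * (\<alpha> i * \<alpha> j))"
    unfolding Ev_def sum_distrib_left sum_distrib_right by (subst sum.swap) (simp add: ac_simps)
  also have "\<dots> = (\<Sum>i<n. \<Sum>j<n. \<Sum>m<n. \<iota> (c i) * \<iota> (d j) * \<iota> (\<beta> i j m) * \<alpha> m)"
    by (rule sum.cong[OF refl], rule sum.cong[OF refl]) (simp add: mt sum_distrib_left ac_simps)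
  also have "\<dots> = (\<Sum>m<n. \<Sum>i<n. \<Sum>j<n. \<iota> (c i) * \<iota> (d j) * \<iota> (\<beta> i j m) * \<alpha> m)"
  proof -
    have "\<And>i. (\<Sum>j<n. \<Sum>m<n. \<iota> (c i) * \<iota> (d j) * \<iota> (\<beta> i j m) * \<alpha> m)
       = (\<Sum>m<n. \<Sum>j<n. \<iota> (c i) * \<iota> (d j) * \<iota> (\<beta> i j m) * \<alpha> m)"
      by (rule sum.swap)
    then have "(\<Sum>i<n. \<Sum>j<n. \<Sum>m<n. \<iota> (c i) * \<iota> (d j) * \<iota> (\<beta> i j m) * \<alpha> m)
       = (\<Sum>i<n. \<Sum>m<n. \<Sum>j<n. \<iota> (c i) * \<iota> (d j) * \<iota> (\<beta> i j m) * \<alpha> m)"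
      by simp
    also have "\<dots> = (\<Sum>m<n. \<Sum>i<n. \<Sum>j<n. \<iota> (c i) * \<iota> (d j) * \<iota> (\<beta> i j m) * \<alpha> m)"
      by (rule sum.swap)
    finally show ?thesis .
  qed
  also have "\<dots> = Ev \<iota> \<alpha> n (\<lambda>m. \<Sum>i<n. \<Sum>j<n. c i * d j * \<beta> i j m)"
    unfolding Ev_def hom_sum[OF hom] hm sum_distrib_right by simp
  finally show ?thesis .
qed

lemma subfield_Inter: assumes "\<forall>F\<in>S. is_subfield F" shows "is_subfield (\<Inter>S)"
  using assms unfolding is_subfield_def by blast

theorem lemma2p2:
  fixes \<iota> :: "'K::field \<Rightarrow> 'L::field" and k :: "'K set" and lam :: "'K \<Rightarrow> 'L"
    and n :: nat and \<alpha> :: "nat \<Rightarrow> 'L" and lc :: "nat \<Rightarrow> 'K \<Rightarrow> 'K"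
    and \<beta> :: "nat \<Rightarrow> nat \<Rightarrow> nat \<Rightarrow> 'K"
  assumes "perfect_field TYPE('K)"
    and "alg_closure \<iota>"
    and "is_subfield k"
    and "lam \<in> Emb k \<iota>"
    and "finite (orbit \<iota> lam)" and "card (orbit \<iota> lam) = n"
    and "is_basis \<iota> (composite \<iota> lam) n \<alpha>"
    and "\<forall>x. lam x = (\<Sum>i<n. \<iota> (lc i x) * \<alpha> i)"
    and "\<forall>i<n. \<forall>j<n. \<alpha> i * \<alpha> j = (\<Sum>m<n. \<iota> (\<beta> i j m) * \<alpha> m)"
  shows "tsv_isomorphic n (\<lambda>x. transpose_mat (phi_mat n \<beta> lc x)) (phi_mat n \<beta> lc)"
proof -
  have hom: "field_hom \<iota>" using assms(2) by (simp add: alg_closure_def)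
  have indep: "\<forall>c. (\<Sum>i<n. \<iota> (c i) * \<alpha> i) = 0 \<longrightarrow> (\<forall>i<n. c i = 0)"
    and Fdef: "composite \<iota> lam = {Ev \<iota> \<alpha> n c | c. True}"
    using assms(7) unfolding is_basis_def Ev_def by blast+
  have sf: "is_subfield (composite \<iota> lam)" unfolding composite_def
    by (rule subfield_Inter) blast
  let ?E = "Ev \<iota> \<alpha> n"
  have prodE: "\<And>c d. ?E c * ?E d = ?E (\<lambda>m. \<Sum>i<n. \<Sum>j<n. c i * d j * \<beta> i j m)"
    by (rule Ev_prod[OF hom assms(9)])
  define B where "B c d = (\<Sum>i<n. \<Sum>j<n. c i * d j * \<beta> i j 0)" for c d
  have Bw: "B c d = g 0" if "?E c * ?E d = ?E g" "0 < n" for c d g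
    using Ev_unique[OF hom indep, of "\<lambda>m. \<Sum>i<n. \<Sum>j<n. c i * d j * \<beta> i j m" g 0] that prodE
    by (simp add: B_def)
  have Bww: "B c d = B c' d'" if "?E c * ?E d = ?E c' * ?E d'" "0 < n" for c d c' d'
  proof -
    have e1: "?E c' * ?E d' = ?E (\<lambda>m. \<Sum>i<n. \<Sum>j<n. c' i * d' j * \<beta> i j m)" by (rule prodE)
    have e2: "?E c * ?E d = ?E (\<lambda>m. \<Sum>i<n. \<Sum>j<n. c' i * d' j * \<beta> i j m)" using e1 that(1) by simp
    show ?thesis using Bw[OF e1 that(2)] Bw[OF e2 that(2)] by simp
  qed
  define \<delta> where "\<delta> j = (\<lambda>i::nat. if i = j then (1::'K) else 0)" for j :: nat
  have hom0: "\<iota> 0 = 0" and hom1: "\<iota> 1 = 1" using hom by (auto simp: field_hom_def)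
  have Ed: "?E (\<delta> j) = \<alpha> j" if "j < n" for j
  proof -
    have "?E (\<delta> j) = (\<Sum>i<n. if i = j then \<alpha> i else 0)"
      unfolding Ev_def by (rule sum.cong) (auto simp: \<delta>_def hom0 hom1)
    then show ?thesis using that by simp
  qed
  have Bd: "B c (\<delta> j) = (\<Sum>i<n. c i * \<beta> i j 0)" if "j < n" for c j
    unfolding B_def
  proof (rule sum.cong[OF refl])
    fix i
    have "(\<Sum>ja<n. c i * \<delta> j ja * \<beta> i ja 0) = (\<Sum>ja<n. if ja = j then c i * \<beta> i ja 0 else 0)"
      by (rule sum.cong) (auto simp: \<delta>_def)
    then show "(\<Sum>ja<n. c i * \<delta> j ja * \<beta> i ja 0) = c i * \<beta> i j 0" using that by simp
  qed
  have Blin: "B c d = (\<Sum>j<n. d j * B c (\<delta> j))" for c d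
  proof -
    have "(\<Sum>j<n. d j * B c (\<delta> j)) = (\<Sum>j<n. \<Sum>i<n. c i * d j * \<beta> i j 0)"
      by (rule sum.cong[OF refl]) (simp add: Bd sum_distrib_left ac_simps)
    also have "\<dots> = B c d" unfolding B_def by (rule sum.swap)
    finally show ?thesis by simp
  qed
  have lamE: "lam x = ?E (\<lambda>k. lc k x)" for x using assms(8) by (simp add: Ev_def)
  let ?phi = "phi_mat n \<beta> lc"
  have phi_ij: "?phi x $$ (i,j) = (\<Sum>k<n. \<beta> j k i * lc k x)" if "i<n" "j<n" for x i j
    using that by (simp add: phi_mat_def)
  have col: "\<alpha> j * lam x = ?E (\<lambda>i. ?phi x $$ (i,j))" if j: "j<n" for j x
  proof -
    have "\<alpha> j * lam x = ?E (\<delta> j) * ?E (\<lambda>k. lc k x)" using Ed j lamE by simp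
    also have "\<dots> = ?E (\<lambda>m. \<Sum>i<n. \<Sum>k<n. \<delta> j i * lc k x * \<beta> i k m)" by (rule prodE)
    also have "\<dots> = ?E (\<lambda>i. ?phi x $$ (i,j))" unfolding Ev_def
    proof (rule sum.cong[OF refl])
      fix m assume m: "m \<in> {..<n}"
      have "(\<Sum>i<n. \<Sum>k<n. \<delta> j i * lc k x * \<beta> i k m)
          = (\<Sum>i<n. if i = j then (\<Sum>k<n. lc k x * \<beta> i k m) else 0)"
        by (rule sum.cong) (auto simp: \<delta>_def)
      also have "\<dots> = (\<Sum>k<n. lc k x * \<beta> j k m)" using j by simp
      also have "\<dots> = ?phi x $$ (m,j)" using m j by (simp add: phi_mat_def ac_simps)
      finally show "\<iota> (\<Sum>i<n. \<Sum>k<n. \<delta> j i * lc k x * \<beta> i k m) * \<alpha> m = \<iota> (?phi x $$ (m,j)) * \<alpha> m"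
        by simp
    qed
    finally show ?thesis .
  qed
  define f where "f v = vec n (\<lambda>j. \<Sum>i<n. v $ i * \<beta> i j 0)" for v :: "'K vec"
  define M where "M = mat n n (\<lambda>(j,i). \<beta> i j 0)"
  have Mc: "M \<in> carrier_mat n n" by (simp add: M_def)
  have fc: "f v \<in> carrier_vec n" for v by (simp add: f_def)
  have fM: "f v = M *\<^sub>v v" if "v \<in> carrier_vec n" for v
    using that by (intro eq_vecI) (auto simp: M_def f_def scalar_prod_def ac_simps atLeast0LessThan)
  have fB: "f v $ j = B (\<lambda>i. v$i) (\<delta> j)" if "j<n" for v j by (simp add: f_def Bd that)
  have equiv: "f (ract v (transpose_mat (?phi x))) = ract (f v) (?phi x)" if v: "v \<in> carrier_vec n" for v x
  proof -
    define u where "u = ract v (transpose_mat (?phi x))"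
    have uc: "u \<in> carrier_vec n" by (simp add: u_def ract_def phi_mat_def)
    have uj: "u $ j = (\<Sum>i<n. v$i * ?phi x $$ (j,i))" if "j<n" for j
      using that v by (simp add: u_def ract_def phi_mat_def)
    have uE: "?E (\<lambda>j. u$j) = ?E (\<lambda>i. v$i) * lam x"
    proof -
      have "?E (\<lambda>i. v$i) * lam x = ?E (\<lambda>m. \<Sum>i<n. \<Sum>k<n. v$i * lc k x * \<beta> i k m)"
        unfolding lamE by (rule prodE)
      also have "\<dots> = ?E (\<lambda>j. u$j)" unfolding Ev_def
        by (rule sum.cong[OF refl]) (simp add: uj phi_ij sum_distrib_left ac_simps)
      finally show ?thesis by simp
    qed
    have "f u = ract (f v) (?phi x)"
    proof (rule eq_vecI)
      show "dim_vec (f u) = dim_vec (ract (f v) (?phi x))" by (simp add: f_def ract_def phi_mat_def)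
      fix j assume "j < dim_vec (ract (f v) (?phi x))"
      then have j: "j < n" by (simp add: ract_def phi_mat_def)
      have "ract (f v) (?phi x) $ j = (\<Sum>i<n. f v $ i * ?phi x $$ (i,j))"
        using j by (simp add: ract_def phi_mat_def f_def)
      also have "\<dots> = (\<Sum>i<n. ?phi x $$ (i,j) * B (\<lambda>i. v$i) (\<delta> i))"
        by (rule sum.cong[OF refl]) (simp add: fB)
      also have "\<dots> = B (\<lambda>i. v$i) (\<lambda>i. ?phi x $$ (i,j))" by (rule Blin[symmetric])
      also have "\<dots> = B (\<lambda>i. u$i) (\<delta> j)"
      proof (rule Bww)
        show "0 < n" using j by simp
        show "?E (\<lambda>i. v$i) * ?E (\<lambda>i. ?phi x $$ (i,j)) = ?E (\<lambda>i. u$i) * ?E (\<delta> j)"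
          using uE col[OF j, of x] Ed[OF j] by (simp add: ac_simps)
      qed
      also have "\<dots> = f u $ j" using fB[OF j] by simp
      finally show "f u $ j = ract (f v) (?phi x) $ j" by simp
    qed
    then show ?thesis by (simp add: u_def)
  qed
  have detM: "det M \<noteq> 0"
  proof
    assume "det M = 0"
    then obtain v where v: "v \<in> carrier_vec n" "v \<noteq> 0\<^sub>v n" "M *\<^sub>v v = 0\<^sub>v n"
      using det_0_iff_vec_prod_zero[OF Mc] by blast
    let ?v = "\<lambda>i. v $ i"
    have B0: "B ?v d = 0" for d
    proof -
      have "B ?v (\<delta> j) = 0" if "j<n" for j
        using fB[OF that, of v] fM[OF v(1)] v(3) that by simp
      moreover have "B ?v d = (\<Sum>j<n. d j * B ?v (\<delta> j))" by (rule Blin)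
      ultimately show ?thesis by simp
    qed
    have Ev0: "?E ?v \<noteq> 0"
    proof
      assume "?E ?v = 0"
      then have "\<forall>i<n. v $ i = 0" using indep unfolding Ev_def by blast
      then have "v = 0\<^sub>v n" using v(1) by (intro eq_vecI) auto
      with v(2) show False by simp
    qed
    have n0: "0 < n" using v(1,2) by (cases n) (auto intro!: eq_vecI)
    have inF: "?E c \<in> composite \<iota> lam" for c using Fdef by blast
    have a0: "\<alpha> 0 \<in> composite \<iota> lam" using inF[of "\<delta> 0"] Ed[OF n0] by simp
    have iv: "inverse (?E ?v) \<in> composite \<iota> lam" using sf inF[of ?v] unfolding is_subfield_def by blast
    have "\<alpha> 0 * inverse (?E ?v) \<in> composite \<iota> lam"
      using sf a0 iv unfolding is_subfield_def by blast
    then obtain d where d: "\<alpha> 0 * inverse (?E ?v) = ?E d" using Fdef by blast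
    have "?E ?v * ?E d = \<alpha> 0" using Ev0 unfolding d[symmetric] by (simp add: field_simps)
    then have "?E ?v * ?E d = ?E (\<delta> 0)" using Ed[OF n0] by simp
    from Bw[OF this n0] have "B ?v d = 1" by (simp add: \<delta>_def)
    with B0 show False by simp
  qed
  from det_non_zero_imp_unit[OF Mc detM, of "()"] obtain Mi where
    Mi: "Mi \<in> carrier_mat n n" "Mi * M = 1\<^sub>m n" "M * Mi = 1\<^sub>m n"
    unfolding Units_def ring_mat_def by auto
  have "tsv_iso n (\<lambda>x. transpose_mat (?phi x)) ?phi f"
    unfolding tsv_iso_def
  proof (intro conjI ballI allI)
    show "bij_betw f (carrier_vec n) (carrier_vec n)"
    proof (rule bij_betwI[where g = "\<lambda>w. Mi *\<^sub>v w"])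
      show "f \<in> carrier_vec n \<rightarrow> carrier_vec n" using fc by blast
      show "(\<lambda>w. Mi *\<^sub>v w) \<in> carrier_vec n \<rightarrow> carrier_vec n" using Mi(1) by auto
      show "Mi *\<^sub>v f x = x" if "x \<in> carrier_vec n" for x
        using that Mi Mc by (simp add: fM assoc_mult_mat_vec[symmetric])
      show "f (Mi *\<^sub>v y) = y" if "y \<in> carrier_vec n" for y
        using that Mi Mc by (simp add: fM assoc_mult_mat_vec[symmetric])
    qed
    show "f (v + w) = f v + f w" if "v \<in> carrier_vec n" "w \<in> carrier_vec n" for v w
      using that Mc by (simp add: fM mult_add_distrib_mat_vec)
    show "f (c \<cdot>\<^sub>v v) = c \<cdot>\<^sub>v f v" if "v \<in> carrier_vec n" for c v
      using that Mc by (simp add: fM mult_mat_vec)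
    show "f (ract v (transpose_mat (?phi x))) = ract (f v) (?phi x)" if "v \<in> carrier_vec n" for x v
      by (rule equiv[OF that])
  qed
  then show ?thesis unfolding tsv_isomorphic_def by blast
qed


end
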